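(* Let $A$ be a quasi-quantale. Then the set $NI(A)$ of idiomatic nuclei on $A$, ordered pointwise ($f\leq g$ iff $f(a)\leq g(a)$ for all $a\in A$), is a frame.
   Context: A quasi-quantale is a complete lattice $A$ equipped with an associative binary operation $(a,b)\mapsto ab$ such that for every directed subset $X\subseteq A$ (non-empty, and any two elements of $X$ have an upper bound in $X$) and every $a\in A$: $(\bigvee X)a=\bigvee\{xa\mid x\in X\}$ and $a(\bigvee X)=\bigvee\{ax\mid x\in X\}$. An inflator on $A$ is a monotone map $p\colon A\to A$ with $a\leq p(a)$ for all $a$. An idiomatic pre-nucleus is an inflator $p$ such that $p(a)p(b)\leq p(ab)=p(a\wedge b)=p(a)\wedge p(b)$ for all $a,b\in A$; an idiomatic nucleus is an idiomatic pre-nucleus $p$ with $p\circ p=p$. A frame is a complete lattice satisfying $a\wedge\bigvee X=\bigvee\{a\wedge x\mid x\in X\}$ for all $a$ and all subsets $X$. *)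

theory Defs
  imports Main
begin

definition directed :: "'a::order set \<Rightarrow> bool" where
  "directed X \<longleftrightarrow> X \<noteq> {} \<and> (\<forall>x\<in>X. \<forall>y\<in>X. \<exists>z\<in>X. x \<le> z \<and> y \<le> z)"

definition quasi_quantale :: "('a::complete_lattice \<Rightarrow> 'a \<Rightarrow> 'a) \<Rightarrow> bool" where
  "quasi_quantale m \<longleftrightarrow>
     (\<forall>a b c. m (m a b) c = m a (m b c)) \<and>
     (\<forall>X a. directed X \<longrightarrow>
        m (Sup X) a = (SUP x\<in>X. m x a) \<and> m a (Sup X) = (SUP x\<in>X. m a x))"

definition inflator :: "('a::complete_lattice \<Rightarrow> 'a) \<Rightarrow> bool" where
  "inflator p \<longleftrightarrow> mono p \<and> (\<forall>a. a \<le> p a)"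

definition idiomatic_prenucleus ::
  "('a::complete_lattice \<Rightarrow> 'a \<Rightarrow> 'a) \<Rightarrow> ('a \<Rightarrow> 'a) \<Rightarrow> bool" where
  "idiomatic_prenucleus m p \<longleftrightarrow> inflator p \<and>
     (\<forall>a b. m (p a) (p b) \<le> p (m a b) \<and> p (m a b) = p (inf a b) \<and> p (inf a b) = inf (p a) (p b))"

definition idiomatic_nucleus ::
  "('a::complete_lattice \<Rightarrow> 'a \<Rightarrow> 'a) \<Rightarrow> ('a \<Rightarrow> 'a) \<Rightarrow> bool" where
  "idiomatic_nucleus m p \<longleftrightarrow> idiomatic_prenucleus m p \<and> p \<circ> p = p"

definition NI :: "('a::complete_lattice \<Rightarrow> 'a \<Rightarrow> 'a) \<Rightarrow> ('a \<Rightarrow> 'a) set" where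
  "NI m = {p. idiomatic_nucleus m p}"

definition is_lub_in :: "'b set \<Rightarrow> ('b \<Rightarrow> 'b \<Rightarrow> bool) \<Rightarrow> 'b set \<Rightarrow> 'b \<Rightarrow> bool" where
  "is_lub_in S le X u \<longleftrightarrow> u \<in> S \<and> (\<forall>x\<in>X. le x u) \<and>
     (\<forall>v\<in>S. (\<forall>x\<in>X. le x v) \<longrightarrow> le u v)"

definition is_glb_in :: "'b set \<Rightarrow> ('b \<Rightarrow> 'b \<Rightarrow> bool) \<Rightarrow> 'b set \<Rightarrow> 'b \<Rightarrow> bool" where
  "is_glb_in S le X u \<longleftrightarrow> u \<in> S \<and> (\<forall>x\<in>X. le u x) \<and>
     (\<forall>v\<in>S. (\<forall>x\<in>X. le v x) \<longrightarrow> le v u)"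

definition frame_on :: "'b set \<Rightarrow> ('b \<Rightarrow> 'b \<Rightarrow> bool) \<Rightarrow> bool" where
  "frame_on S le \<longleftrightarrow>
     (\<forall>x\<in>S. le x x) \<and>
     (\<forall>x\<in>S. \<forall>y\<in>S. le x y \<and> le y x \<longrightarrow> x = y) \<and>
     (\<forall>x\<in>S. \<forall>y\<in>S. \<forall>z\<in>S. le x y \<and> le y z \<longrightarrow> le x z) \<and>
     (\<forall>X\<subseteq>S. \<exists>u. is_lub_in S le X u) \<and>
     (\<forall>a\<in>S. \<forall>X\<subseteq>S. \<forall>u w. is_lub_in S le X u \<longrightarrow> is_glb_in S le {a, u} w \<longrightarrow>
        is_lub_in S le {m. \<exists>x\<in>X. is_glb_in S le {a, x} m} w)"

end

theory Submission
  imports Defs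
begin

lemma qq_dir:
  assumes "quasi_quantale m" "directed Y"
  shows "m (Sup Y) a = (SUP y\<in>Y. m y a)" "m a (Sup Y) = (SUP y\<in>Y. m a y)"
  using assms unfolding quasi_quantale_def by blast+

lemma dir2: "(x::'a::complete_lattice) \<le> y \<Longrightarrow> directed {x, y}"
  unfolding directed_def by auto

lemma m_mono:
  assumes q: "quasi_quantale m" and "a \<le> a'" "b \<le> b'"
  shows "m a b \<le> m a' b'"
proof -
  have "m a' b = sup (m a b) (m a' b)"
    using qq_dir(1)[OF q dir2[OF assms(2)], of b] assms(2) by (simp add: sup.absorb2)
  hence "m a b \<le> m a' b" by (metis sup.cobounded1)
  also have "m a' b' = sup (m a' b) (m a' b')"
    using qq_dir(2)[OF q dir2[OF assms(3)], of a'] assms(3) by (simp add: sup.absorb2)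
  hence "m a' b \<le> m a' b'" by (metis sup.cobounded1)
  finally show ?thesis .
qed

lemma NI_iff: "p \<in> NI m \<longleftrightarrow> mono p \<and> (\<forall>a. a \<le> p a) \<and>
   (\<forall>a b. m (p a) (p b) \<le> p (m a b) \<and> p (m a b) = p (inf a b) \<and> p (inf a b) = inf (p a) (p b))
   \<and> (\<forall>a. p (p a) = p a)"
  by (auto simp: NI_def idiomatic_nucleus_def idiomatic_prenucleus_def inflator_def fun_eq_iff)

lemma inf_dir:
  assumes q: "quasi_quantale m" and p: "p \<in> NI m" and s: "p s = s" and Y: "directed Y"
    and le: "\<forall>y\<in>Y. inf t y \<le> s"
  shows "inf t (Sup Y) \<le> s"
proof -
  have pm: "mono p" "\<And>a. a \<le> p a" "\<And>a b. p (m a b) = p (inf a b)"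
    using p by (auto simp: NI_iff)
  have "m t y \<le> s" if "y \<in> Y" for y
  proof -
    have "m t y \<le> p (m t y)" by (rule pm(2))
    also have "\<dots> = p (inf t y)" by (rule pm(3))
    also have "\<dots> \<le> p s" using le that pm(1) by (auto dest: monoD)
    finally show ?thesis using s by simp
  qed
  hence ms: "m t (Sup Y) \<le> s" using qq_dir(2)[OF q Y] by (simp add: SUP_least)
  have "inf t (Sup Y) \<le> p (inf t (Sup Y))" by (rule pm(2))
  also have "\<dots> = p (m t (Sup Y))" by (simp add: pm(3))
  also have "\<dots> \<le> p s" using ms pm(1) by (auto dest: monoD)
  finally show ?thesis using s by simp
qed

lemma NI_Inf:
  assumes q: "quasi_quantale m" and F: "F \<subseteq> NI m"
  shows "(\<lambda>a. INF f\<in>F. f a) \<in> NI m"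
proof -
  let ?q = "\<lambda>a. INF f\<in>F. f a"
  have fp: "mono f" "\<And>a. a \<le> f a" "\<And>a b. m (f a) (f b) \<le> f (m a b)"
    "\<And>a b. f (m a b) = f (inf a b)" "\<And>a b. f (inf a b) = inf (f a) (f b)" "\<And>a. f (f a) = f a"
    if "f \<in> F" for f using subsetD[OF F that] unfolding NI_iff by blast+
  have mono: "mono ?q"
    by (rule monoI, rule INF_mono) (use fp(1) in \<open>auto dest: monoD\<close>)
  have infl: "a \<le> ?q a" for a by (rule INF_greatest) (use fp(2) in auto)
  have idem: "?q (?q a) = ?q a" for a
  proof (rule antisym)
    show "?q (?q a) \<le> ?q a"
    proof (rule INF_greatest)
      fix f assume f: "f \<in> F"
      have "?q (?q a) \<le> f (?q a)" using f by (rule INF_lower)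
      also have "\<dots> \<le> f (f a)" using fp(1)[OF f] f by (auto dest: monoD intro: INF_lower)
      finally show "?q (?q a) \<le> f a" using fp(6)[OF f] by simp
    qed
  qed (rule infl)
  have im: "?q (m a b) = ?q (inf a b)" for a b using fp(4) by (auto intro: INF_cong)
  have ii: "?q (inf a b) = inf (?q a) (?q b)" for a b
    using fp(5) by (simp add: INF_inf_distrib)
  have mm: "m (?q a) (?q b) \<le> ?q (m a b)" for a b
  proof (rule INF_greatest)
    fix f assume f: "f \<in> F"
    have "m (?q a) (?q b) \<le> m (f a) (f b)"
      by (rule m_mono[OF q]) (use f in \<open>auto intro: INF_lower\<close>)
    also have "\<dots> \<le> f (m a b)" by (rule fp(3)[OF f])
    finally show "m (?q a) (?q b) \<le> f (m a b)" .
  qed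
  show ?thesis unfolding NI_iff using mono infl idem im ii mm by blast
qed

definition cl :: "('a::complete_lattice \<Rightarrow> 'a) set \<Rightarrow> 'a \<Rightarrow> 'a" where
  "cl X a = Inf {t. a \<le> t \<and> (\<forall>x\<in>X. x t = t)}"

lemma cl_le: "a \<le> t \<Longrightarrow> \<forall>x\<in>X. x t = t \<Longrightarrow> cl X a \<le> t"
  unfolding cl_def by (rule Inf_lower) auto

lemma cl_ge: "a \<le> cl X a"
  unfolding cl_def by (rule Inf_greatest) auto

lemma cl_fix:
  assumes "X \<subseteq> NI m" "x \<in> X" shows "x (cl X a) = cl X a"
proof -
  have x: "mono x" "\<And>a. a \<le> x a" using assms by (auto simp: NI_iff)
  have "x (cl X a) \<le> cl X a"
    unfolding cl_def
  proof (rule Inf_greatest)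
    fix t assume t: "t \<in> {t. a \<le> t \<and> (\<forall>x\<in>X. x t = t)}"
    have "cl X a \<le> t" using t by (auto intro: cl_le)
    hence "x (cl X a) \<le> x t" using x(1) by (auto dest: monoD)
    moreover have "x t = t" using t assms(2) by auto
    ultimately show "x (Inf {t. a \<le> t \<and> (\<forall>x\<in>X. x t = t)}) \<le> t" by (simp add: cl_def)
  qed
  thus ?thesis using x(2) by (simp add: antisym)
qed

lemma cl_upper:
  assumes X: "X \<subseteq> NI m" and x: "x \<in> X" shows "x a \<le> cl X a"
proof -
  have "mono x" using subsetD[OF X x] unfolding NI_iff by blast
  hence "x a \<le> x (cl X a)" using cl_ge[of a X] by (rule monoD)
  thus ?thesis using cl_fix[OF X x, of a] by simp
qed

lemma cl_mono:
  assumes X: "X \<subseteq> NI m" and ab: "a \<le> b" shows "cl X a \<le> cl X b"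
proof (rule cl_le)
  show "a \<le> cl X b" using order_trans[OF ab cl_ge] .
  show "\<forall>x\<in>X. x (cl X b) = cl X b" using cl_fix[OF X] by blast
qed

lemma cl_idem:
  assumes X: "X \<subseteq> NI m" shows "cl X (cl X a) = cl X a"
proof (rule antisym)
  show "cl X (cl X a) \<le> cl X a"
    by (rule cl_le[OF order_refl]) (use cl_fix[OF X] in blast)
qed (rule cl_ge)

lemma cl_closure:
  assumes X: "X \<subseteq> NI m" and aD: "a \<in> D"
    and cD: "\<And>x y. x \<in> X \<Longrightarrow> y \<in> D \<Longrightarrow> x y \<in> D"
    and dD: "\<And>Y. directed Y \<Longrightarrow> Y \<subseteq> D \<Longrightarrow> Sup Y \<in> D"
  shows "cl X a \<in> D"
proof -
  let ?P = "{y. y \<in> D \<and> a \<le> y \<and> y \<le> cl X a}"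
  have po: "partial_order_on ?P (relation_of (\<le>) ?P)"
    unfolding partial_order_on_def preorder_on_def refl_on_def trans_def antisym_def relation_of_def
    by auto
  have "\<exists>u\<in>?P. \<forall>c\<in>C. c \<le> u" if C: "C \<in> Chains (relation_of (\<le>) ?P)" for C
  proof (cases "C = {}")
    case True thus ?thesis using aD cl_ge[of a X] by auto
  next
    case False
    have CP: "C \<subseteq> ?P" using Chains_relation_of[OF C] .
    have dir: "directed C" unfolding directed_def
    proof (intro conjI ballI)
      show "C \<noteq> {}" by fact
      fix x y assume "x \<in> C" "y \<in> C"
      hence "(x, y) \<in> relation_of (\<le>) ?P \<or> (y, x) \<in> relation_of (\<le>) ?P"
        using C unfolding Chains_def by auto
      thus "\<exists>z\<in>C. x \<le> z \<and> y \<le> z" using \<open>x \<in> C\<close> \<open>y \<in> C\<close>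
        unfolding relation_of_def by auto
    qed
    obtain c0 where c0: "c0 \<in> C" using False by auto
    have "Sup C \<in> D" using dD[OF dir] CP by auto
    moreover have "a \<le> Sup C" using c0 CP by (auto intro: order_trans[OF _ Sup_upper])
    moreover have "Sup C \<le> cl X a" using CP by (auto intro: Sup_least)
    ultimately show ?thesis using CP by (auto intro: Sup_upper)
  qed
  then obtain z where z: "z \<in> ?P" and zmax: "\<And>y. y \<in> ?P \<Longrightarrow> z \<le> y \<Longrightarrow> y = z"
    using predicate_Zorn[OF po] by blast
  have fx: "x z = z" if x: "x \<in> X" for x
  proof -
    have xp: "mono x" "\<And>a. a \<le> x a" using x X by (auto simp: NI_iff)
    have "x z \<in> D" using cD[OF x] z by auto
    moreover have "a \<le> x z" using z xp(2) order_trans by blast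
    moreover have "x z \<le> cl X a"
      using z xp(1) cl_fix[OF X x, of a] by (metis (mono_tags, lifting) mem_Collect_eq monoD)
    ultimately show ?thesis using zmax xp(2) by auto
  qed
  have "cl X a \<le> z" using z fx by (auto intro: cl_le)
  hence "cl X a = z" using z by auto
  thus ?thesis using z by auto
qed

lemma cl_NI:
  assumes q: "quasi_quantale m" and X: "X \<subseteq> NI m" and x0: "x0 \<in> X"
  shows "cl X \<in> NI m"
proof -
  have xp: "mono x" "\<And>a. a \<le> x a" "\<And>a b. m (x a) (x b) \<le> x (m a b)"
    "\<And>a b. x (m a b) = x (inf a b)" "\<And>a b. x (inf a b) = inf (x a) (x b)" "\<And>a. x (x a) = x a"
    "x \<in> NI m"
    if "x \<in> X" for x using subsetD[OF X that] unfolding NI_iff by blast+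
  have mono: "mono (cl X)" by (rule monoI) (rule cl_mono[OF X])
  have ii: "cl X (inf a b) = inf (cl X a) (cl X b)" for a b
  proof (rule antisym)
    show "cl X (inf a b) \<le> inf (cl X a) (cl X b)"
      by (auto intro: cl_mono[OF X])
    let ?s = "cl X (inf a b)"
    have fs: "x0 ?s = ?s" by (rule cl_fix[OF X x0])
    have s1: "cl X b \<in> {y. inf a y \<le> ?s}"
    proof (rule cl_closure[OF X])
      show "b \<in> {y. inf a y \<le> ?s}" using cl_ge by auto
    next
      fix x y assume x: "x \<in> X" and y: "y \<in> {y. inf a y \<le> ?s}"
      have "inf a (x y) \<le> inf (x a) (x y)" using xp(2)[OF x] inf_mono by blast
      also have "\<dots> = x (inf a y)" using xp(5)[OF x] by simp
      also have "\<dots> \<le> x ?s" using y xp(1)[OF x] by (auto dest: monoD)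
      finally show "x y \<in> {y. inf a y \<le> ?s}" using cl_fix[OF X x] by simp
    next
      fix Y assume "directed Y" "Y \<subseteq> {y. inf a y \<le> ?s}"
      thus "Sup Y \<in> {y. inf a y \<le> ?s}" using inf_dir[OF q xp(7)[OF x0] fs] by auto
    qed
    have "cl X a \<in> {y. inf y (cl X b) \<le> ?s}"
    proof (rule cl_closure[OF X])
      show "a \<in> {y. inf y (cl X b) \<le> ?s}" using s1 by (simp add: inf_commute)
    next
      fix x y assume x: "x \<in> X" and y: "y \<in> {y. inf y (cl X b) \<le> ?s}"
      have "inf (x y) (cl X b) = inf (x y) (x (cl X b))" using cl_fix[OF X x] by simp
      also have "\<dots> = x (inf y (cl X b))" using xp(5)[OF x] by simp
      also have "\<dots> \<le> x ?s" using y xp(1)[OF x] by (auto dest: monoD)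
      finally show "x y \<in> {y. inf y (cl X b) \<le> ?s}" using cl_fix[OF X x] by simp
    next
      fix Y assume "directed Y" "Y \<subseteq> {y. inf y (cl X b) \<le> ?s}"
      thus "Sup Y \<in> {y. inf y (cl X b) \<le> ?s}"
        using inf_dir[OF q xp(7)[OF x0] fs, of Y "cl X b"] by (auto simp: inf_commute)
    qed
    thus "inf (cl X a) (cl X b) \<le> ?s" by simp
  qed
  have im: "cl X (m a b) = cl X (inf a b)" for a b
  proof (rule antisym)
    have "m a b \<le> x0 (m a b)" by (rule xp(2)[OF x0])
    also have "\<dots> = x0 (inf a b)" by (rule xp(4)[OF x0])
    also have "\<dots> \<le> cl X (inf a b)" by (rule cl_upper[OF X x0])
    finally have "cl X (m a b) \<le> cl X (cl X (inf a b))" by (rule cl_mono[OF X])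
    thus "cl X (m a b) \<le> cl X (inf a b)" using cl_idem[OF X] by simp
  next
    have "inf a b \<le> x0 (inf a b)" by (rule xp(2)[OF x0])
    also have "\<dots> = x0 (m a b)" by (rule xp(4)[OF x0, symmetric])
    also have "\<dots> \<le> cl X (m a b)" by (rule cl_upper[OF X x0])
    finally have "cl X (inf a b) \<le> cl X (cl X (m a b))" by (rule cl_mono[OF X])
    thus "cl X (inf a b) \<le> cl X (m a b)" using cl_idem[OF X] by simp
  qed
  have mm: "m (cl X a) (cl X b) \<le> cl X (m a b)" for a b
  proof -
    let ?s = "cl X (m a b)"
    have s1: "cl X b \<in> {y. m a y \<le> ?s}"
    proof (rule cl_closure[OF X])
      show "b \<in> {y. m a y \<le> ?s}" using cl_ge by auto
    next
      fix x y assume x: "x \<in> X" and y: "y \<in> {y. m a y \<le> ?s}"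
      have "m a (x y) \<le> m (x a) (x y)" using m_mono[OF q] xp(2)[OF x] by blast
      also have "\<dots> \<le> x (m a y)" by (rule xp(3)[OF x])
      also have "\<dots> \<le> x ?s" using y xp(1)[OF x] by (auto dest: monoD)
      finally show "x y \<in> {y. m a y \<le> ?s}" using cl_fix[OF X x] by simp
    next
      fix Y assume "directed Y" "Y \<subseteq> {y. m a y \<le> ?s}"
      thus "Sup Y \<in> {y. m a y \<le> ?s}" using qq_dir(2)[OF q] by (auto intro: SUP_least)
    qed
    have "cl X a \<in> {y. m y (cl X b) \<le> ?s}"
    proof (rule cl_closure[OF X])
      show "a \<in> {y. m y (cl X b) \<le> ?s}" using s1 by simp
    next
      fix x y assume x: "x \<in> X" and y: "y \<in> {y. m y (cl X b) \<le> ?s}"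
      have "m (x y) (cl X b) = m (x y) (x (cl X b))" using cl_fix[OF X x] by simp
      also have "\<dots> \<le> x (m y (cl X b))" by (rule xp(3)[OF x])
      also have "\<dots> \<le> x ?s" using y xp(1)[OF x] by (auto dest: monoD)
      finally show "x y \<in> {y. m y (cl X b) \<le> ?s}" using cl_fix[OF X x] by simp
    next
      fix Y assume "directed Y" "Y \<subseteq> {y. m y (cl X b) \<le> ?s}"
      thus "Sup Y \<in> {y. m y (cl X b) \<le> ?s}" using qq_dir(1)[OF q] by (auto intro: SUP_least)
    qed
    thus ?thesis by simp
  qed
  show ?thesis unfolding NI_iff using mono cl_ge ii im mm cl_idem[OF X] by blast
qed

theorem proposition3p13:
  fixes m :: "'a::complete_lattice \<Rightarrow> 'a \<Rightarrow> 'a"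
  assumes "quasi_quantale m"
  shows "frame_on (NI m) (\<lambda>f g. \<forall>a. f a \<le> g a)"
proof -
  note q = assms
  let ?le = "\<lambda>f g. \<forall>a. (f::'a \<Rightarrow> 'a) a \<le> g a"
  let ?N = "NI m"
  have inf2: "(\<lambda>a. inf (f a) (g a)) \<in> ?N" if "f \<in> ?N" "g \<in> ?N" for f g
    using NI_Inf[OF q, of "{f,g}"] that by simp
  have glb2: "is_glb_in ?N ?le {f,g} w \<longleftrightarrow> w = (\<lambda>a. inf (f a) (g a))"
    if f: "f \<in> ?N" and g: "g \<in> ?N" for f g w
  proof
    assume w: "is_glb_in ?N ?le {f,g} w"
    hence "?le (\<lambda>a. inf (f a) (g a)) w" using inf2[OF f g] unfolding is_glb_in_def by auto
    moreover have "?le w (\<lambda>a. inf (f a) (g a))" using w unfolding is_glb_in_def by auto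
    ultimately show "w = (\<lambda>a. inf (f a) (g a))" by (intro ext antisym) auto
  next
    assume "w = (\<lambda>a. inf (f a) (g a))"
    thus "is_glb_in ?N ?le {f,g} w" using inf2[OF f g] unfolding is_glb_in_def by auto
  qed
  have lub: "is_lub_in ?N ?le X (\<lambda>a. INF g\<in>{g\<in>?N. \<forall>x\<in>X. ?le x g}. g a)"
    if X: "X \<subseteq> ?N" for X
    unfolding is_lub_in_def
  proof (intro conjI ballI impI allI)
    show "(\<lambda>a. INF g\<in>{g\<in>?N. \<forall>x\<in>X. ?le x g}. g a) \<in> ?N" by (rule NI_Inf[OF q]) auto
  next
    fix x a assume "x \<in> X"
    thus "x a \<le> (INF g\<in>{g\<in>?N. \<forall>x\<in>X. ?le x g}. g a)" by (auto intro: INF_greatest)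
  next
    fix v a assume "v \<in> ?N" "\<forall>x\<in>X. ?le x v"
    thus "(INF g\<in>{g\<in>?N. \<forall>x\<in>X. ?le x g}. g a) \<le> v a" by (auto intro: INF_lower2)
  qed
  show ?thesis unfolding frame_on_def
  proof (intro conjI ballI allI impI)
    fix x y assume "x \<in> ?N" "y \<in> ?N" "?le x y \<and> ?le y x"
    thus "x = y" by (auto intro: antisym)
  next
    fix X assume "X \<subseteq> ?N" thus "\<exists>u. is_lub_in ?N ?le X u" using lub by blast
  next
    fix f X u w assume f: "f \<in> ?N" and X: "X \<subseteq> ?N" and u: "is_lub_in ?N ?le X u"
      and w: "is_glb_in ?N ?le {f, u} w"
    have uN: "u \<in> ?N" using u unfolding is_lub_in_def by auto
    have wdef: "w = (\<lambda>a. inf (f a) (u a))" using glb2[OF f uN] w by blast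
    have M: "{mm. \<exists>x\<in>X. is_glb_in ?N ?le {f, x} mm} = (\<lambda>x a. inf (f a) (x a)) ` X"
      using glb2[OF f] X by auto
    have xu: "?le x u" if "x \<in> X" for x using u that unfolding is_lub_in_def by auto
    show "is_lub_in ?N ?le {mm. \<exists>x\<in>X. is_glb_in ?N ?le {f, x} mm} w"
      unfolding M is_lub_in_def
    proof (intro conjI ballI impI)
      show "w \<in> ?N" using w unfolding is_glb_in_def by auto
    next
      fix g assume "g \<in> (\<lambda>x a. inf (f a) (x a)) ` X"
      thus "?le g w" unfolding wdef using xu by (auto intro: inf_mono le_infI2)
    next
      fix v assume v: "v \<in> ?N" and vub: "\<forall>g\<in>(\<lambda>x a. inf (f a) (x a)) ` X. ?le g v"
      show "?le w v"
      proof (cases "X = {}")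
        case True
        hence "?le u v" using u v unfolding is_lub_in_def by auto
        thus ?thesis unfolding wdef by (auto intro: le_infI2)
      next
        case False
        then obtain x0 where x0: "x0 \<in> X" by auto
        have cN: "cl X \<in> ?N" by (rule cl_NI[OF q X x0])
        have "?le u (cl X)" using u cN cl_upper[OF X] unfolding is_lub_in_def by auto
        have fp: "mono f" "\<And>a. a \<le> f a" "\<And>a b. f (inf a b) = inf (f a) (f b)"
          "\<And>a. f (f a) = f a" using f unfolding NI_iff by blast+
        have vp: "mono v" "\<And>a. v (v a) = v a" using v unfolding NI_iff by blast+
        have vinf: "inf (f z) (x z) \<le> v z" if "x \<in> X" for x z
          using vub that by auto
        show ?thesis
        proof
          fix a
          let ?s = "v a"
          have "cl X a \<in> {y. a \<le> y \<and> inf (f a) y \<le> ?s}"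
          proof (rule cl_closure[OF X])
            show "a \<in> {y. a \<le> y \<and> inf (f a) y \<le> ?s}"
              using v unfolding NI_iff by (auto intro: le_infI2)
          next
            fix x y assume x: "x \<in> X" and y: "y \<in> {y. a \<le> y \<and> inf (f a) y \<le> ?s}"
            have xp: "mono x" "\<And>a. a \<le> x a" "\<And>a b. x (inf a b) = inf (x a) (x b)"
              using subsetD[OF X x] unfolding NI_iff by blast+
            let ?z = "inf (f a) y"
            have ay: "a \<le> y" and zs: "?z \<le> ?s" using y by auto
            have "f a \<le> f y" using fp(1) ay by (rule monoD)
            hence "inf (f a) (x y) \<le> f ?z" using fp(3)[of "f a" y] fp(4)[of a] by (auto intro: le_infI1)
            moreover have "inf (f a) (x y) \<le> x ?z"
              using xp(3)[of "f a" y] xp(2)[of "f a"] by (auto intro: le_infI1 le_infI2 inf_mono)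
            ultimately have "inf (f a) (x y) \<le> inf (f ?z) (x ?z)" by simp
            also have "\<dots> \<le> v ?z" by (rule vinf[OF x])
            also have "\<dots> \<le> v ?s" using vp(1) zs by (rule monoD)
            finally have "inf (f a) (x y) \<le> ?s" using vp(2) by simp
            moreover have "a \<le> x y" using ay xp(2)[of y] by (rule order_trans)
            ultimately show "x y \<in> {y. a \<le> y \<and> inf (f a) y \<le> ?s}" by simp
          next
            fix Y assume Y: "directed Y" "Y \<subseteq> {y. a \<le> y \<and> inf (f a) y \<le> ?s}"
            have "inf (f a) (Sup Y) \<le> ?s"
              using inf_dir[OF q v vp(2)[of a] Y(1), of "f a"] Y(2) by auto
            moreover obtain y0 where "y0 \<in> Y" using Y(1) unfolding directed_def by auto
            hence "a \<le> Sup Y" using Y(2) by (auto intro: order_trans[OF _ Sup_upper])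
            ultimately show "Sup Y \<in> {y. a \<le> y \<and> inf (f a) y \<le> ?s}" by simp
          qed
          hence "inf (f a) (cl X a) \<le> v a" by simp
          moreover have "inf (f a) (u a) \<le> inf (f a) (cl X a)"
            using \<open>?le u (cl X)\<close> by (intro inf_mono order_refl) blast
          ultimately show "w a \<le> v a" unfolding wdef by (metis order_trans)
        qed
      qed
    qed
  qed (auto intro: order_trans)
qed

end
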